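(* Let $V$ be a finite vocabulary. Each word $x\in V$ has a synonym set $S_x\subseteq V$ with $x\in S_x$, the synonym relation being symmetric, and a nonempty perturbation set $P_x\subseteq V$. Fix integers $L\ge1$, $0\le R\le L$, a finite label set $\mathcal{Y}$ with $|\mathcal{Y}|\ge2$, and a classifier $f:V^L\to\mathcal{Y}$. For $X=x_1,\ldots,x_L\in V^L$ let $S_X=\{X'\in V^L: \sum_i\mathbb{I}\{x'_i\ne x_i\}\le R,\ x'_i\in S_{x_i}\ \forall i\}$, let $\Pi_X(Z)=\prod_{i=1}^L\mathbb{I}\{z_i\in P_{x_i}\}/|P_{x_i}|$, let $g^{\mathrm{RS}}(X,c)=\mathbb{P}_{Z\sim\Pi_X}(f(Z)=c)$, and let $f^{\mathrm{RS}}(X)=\arg\max_{c\in\mathcal{Y}}g^{\mathrm{RS}}(X,c)$. Assume $|P_x|=|P_{x'}|$ for every word $x$ and every $x'\in S_x$. Let $q_x=\min_{x'\in S_x}|P_x\cap P_{x'}|/|P_x|$, and for a sentence $X$ order its positions $i_1,\ldots,i_L$ so that $q_{x_{i_1}}\le\cdots\le q_{x_{i_L}}$ and put $q_X=1-\prod_{j=1}^R q_{x_{i_j}}$. For a sentence $X$ and a label $y\in\mathcal{Y}$ define $y_B=\arg\max_{c\in\mathcal{Y},c\ne y}g^{\mathrm{RS}}(X,c)$. If $$\Delta_X:=g^{\mathrm{RS}}(X,y)-g^{\mathrm{RS}}(X,y_B)-2q_X>0,$$ then $f^{\mathrm{RS}}(X')=f^{\mathrm{RS}}(X)=y$ for every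 $X'\in S_X$ (i.e. $y$ is the unique maximizer of $c\mapsto g^{\mathrm{RS}}(X',c)$ for every $X'\in S_X$).
   Context: $f^{\mathrm{RS}}$ is the randomized-smoothing classifier built from the base classifier $f$ by uniformly random word substitutions from the perturbation sets. *)

theory Defs
  imports Complex_Main
begin

text \<open>The randomized-smoothing score
 g^RS(X,c) = P_{Z ~ Pi_X}(f Z = c) is written as the finite sum of the product
 density Pi_X over all sentences Z of length L with f Z = c.\<close>

definition PiX :: "('w \<Rightarrow> 'w set) \<Rightarrow> nat \<Rightarrow> 'w list \<Rightarrow> 'w list \<Rightarrow> real" where
  "PiX P L X Z = (\<Prod>i<L. (if Z ! i \<in> P (X ! i) then 1 else 0) / real (card (P (X ! i))))"

definition gRS :: "('w \<Rightarrow> 'w set) \<Rightarrow> nat \<Rightarrow> ('w list \<Rightarrow> 'y) \<Rightarrow> 'w list \<Rightarrow> 'y \<Rightarrow> real" where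
  "gRS P L f X c = (\<Sum>Z\<in>{Z. length Z = L \<and> f Z = c}. PiX P L X Z)"

text \<open>f^RS(X) = argmax_c g^RS(X,c) (well-defined when the maximiser is unique).\<close>
definition fRS :: "('w \<Rightarrow> 'w set) \<Rightarrow> nat \<Rightarrow> ('w list \<Rightarrow> 'y) \<Rightarrow> 'w list \<Rightarrow> 'y" where
  "fRS P L f X = (THE c. \<forall>c'. c' \<noteq> c \<longrightarrow> gRS P L f X c' < gRS P L f X c)"

text \<open>y_B = argmax over c \<noteq> y of g^RS(X,c) (an arbitrary maximiser).\<close>
definition yB :: "('w \<Rightarrow> 'w set) \<Rightarrow> nat \<Rightarrow> ('w list \<Rightarrow> 'y) \<Rightarrow> 'w list \<Rightarrow> 'y \<Rightarrow> 'y" where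
  "yB P L f X y = (SOME c. c \<noteq> y \<and> (\<forall>c'. c' \<noteq> y \<longrightarrow> gRS P L f X c' \<le> gRS P L f X c))"

definition SX :: "('w \<Rightarrow> 'w set) \<Rightarrow> nat \<Rightarrow> nat \<Rightarrow> 'w list \<Rightarrow> 'w list set" where
  "SX S L R X = {X'. length X' = L \<and> card {i. i < L \<and> X' ! i \<noteq> X ! i} \<le> R
                      \<and> (\<forall>i<L. X' ! i \<in> S (X ! i))}"

definition qw :: "('w \<Rightarrow> 'w set) \<Rightarrow> ('w \<Rightarrow> 'w set) \<Rightarrow> 'w \<Rightarrow> real" where
  "qw S P x = Min ((\<lambda>x'. real (card (P x \<inter> P x')) / real (card (P x))) ` S x)"

definition qX :: "('w \<Rightarrow> 'w set) \<Rightarrow> ('w \<Rightarrow> 'w set) \<Rightarrow> nat \<Rightarrow> 'w list \<Rightarrow> real" where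
  "qX S P R X = 1 - prod_list (take R (sort (map (qw S P) X)))"

end

theory Submission
  imports Defs "HOL-Library.Multiset"
begin

lemma prod_list_01:
  fixes xs :: "real list"
  assumes "\<forall>x\<in>set xs. 0 \<le> x \<and> x \<le> 1"
  shows "0 \<le> prod_list xs \<and> prod_list xs \<le> 1"
  using assms by (induction xs) (auto intro: mult_le_one)

lemma prod_mset_nonneg':
  fixes A :: "real multiset"
  shows "\<forall>x\<in>#A. 0 \<le> x \<Longrightarrow> 0 \<le> prod_mset A"
  by (induction A) auto

lemma sort_min_cons:
  fixes qs :: "real list"
  assumes "qs \<noteq> []"
  shows "sort qs = Min (set qs) # sort (remove1 (Min (set qs)) qs)"
proof (rule properties_for_sort)
  let ?m = "Min (set qs)"
  have mem: "?m \<in> set qs" using assms by simp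
  then show "mset (?m # sort (remove1 ?m qs)) = mset qs"
    by (simp add: insert_DiffM)
  show "sorted (?m # sort (remove1 ?m qs))"
    using assms set_remove1_subset[of ?m qs] by auto
qed

lemma prod_take_sort_le:
  fixes qs :: "real list"
  assumes "\<forall>x\<in>set qs. 0 \<le> x \<and> x \<le> 1" "A \<subseteq># mset qs" "size A \<le> R"
  shows "prod_list (take R (sort qs)) \<le> prod_mset A"
  using assms
proof (induction "length qs" arbitrary: qs R A rule: less_induct)
  case less
  show ?case
  proof (cases "R = 0 \<or> qs = []")
    case True
    then have "A = {#}" using less.prems
      by auto
    then show ?thesis using True by auto
  next
    case False
    then obtain R' where R: "R = Suc R'" and ne: "qs \<noteq> []" by (cases R) auto
    define m where "m = Min (set qs)"
    define rest where "rest = remove1 m qs"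
    have mem: "m \<in> set qs" using ne m_def by simp
    have srt: "sort qs = m # sort rest" using sort_min_cons[OF ne] m_def rest_def by simp
    have len: "length rest < length qs" using mem ne rest_def by (simp add: length_remove1)
    have rest01: "\<forall>x\<in>set rest. 0 \<le> x \<and> x \<le> 1" using less.prems(1) rest_def
      by (meson notin_set_remove1)
    have m01: "0 \<le> m" "m \<le> 1" using less.prems(1) mem by auto
    have mrest: "mset rest = mset qs - {#m#}" by (simp add: rest_def)
    have lhs: "prod_list (take R (sort qs)) = m * prod_list (take R' (sort rest))"
      by (simp add: srt R)
    have t01: "\<forall>x\<in>set (take R' (sort rest)). 0 \<le> x \<and> x \<le> 1" using rest01
      by (auto dest: in_set_takeD)
    have nn: "0 \<le> prod_list (take R' (sort rest))"
      using prod_list_01[OF t01] by simp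
    have A01: "\<forall>x\<in>#A. 0 \<le> x \<and> x \<le> 1" using less.prems(1,2)
      by (metis mset_subset_eqD set_mset_mset)
    show ?thesis
    proof (cases "A = {#}")
      case True
      have "\<forall>x\<in>set (take R (sort qs)). 0 \<le> x \<and> x \<le> 1" using less.prems(1)
        by (auto dest: in_set_takeD)
      then show ?thesis using True prod_list_01 by auto
    next
      case Ane: False
      show ?thesis
      proof (cases "m \<in># A")
        case True
        define A' where "A' = A - {#m#}"
        have sub: "A' \<subseteq># mset rest" unfolding A'_def mrest
          using less.prems(2) by (auto simp: subseteq_mset_def diff_le_mono)
        have sz: "size A' \<le> R'" using less.prems(3) True R unfolding A'_def
          by (simp add: size_Diff_singleton)
        have IH: "prod_list (take R' (sort rest)) \<le> prod_mset A'"
          using less.hyps[OF len rest01 sub sz] .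
        have "prod_mset A = m * prod_mset A'" unfolding A'_def
          using True by (rule prod_mset.remove)
        then show ?thesis using lhs IH m01 by (simp add: mult_left_mono)
      next
        case False
        obtain a where a: "a \<in># A" using Ane by blast
        define A' where "A' = A - {#a#}"
        have "A \<subseteq># mset qs - {#m#}" using less.prems(2) False
          by (auto simp: subseteq_mset_def not_in_iff)
        then have sub: "A' \<subseteq># mset rest" unfolding A'_def mrest
          by (meson diff_subset_eq_self subset_mset.order_trans)
        have sz: "size A' \<le> R'" using less.prems(3) a R unfolding A'_def
          by (simp add: size_Diff_singleton)
        have IH: "prod_list (take R' (sort rest)) \<le> prod_mset A'"
          using less.hyps[OF len rest01 sub sz] .
        have pA: "prod_mset A = a * prod_mset A'" unfolding A'_def
          using a by (rule prod_mset.remove)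
        have "a \<in> set qs" using a less.prems(2) by (metis mset_subset_eqD set_mset_mset)
        then have ma: "m \<le> a" unfolding m_def by simp
        have a0: "0 \<le> a" using A01 a by auto
        have "m * prod_list (take R' (sort rest)) \<le> a * prod_mset A'"
          using ma IH a0 nn by (simp add: mult_mono)
        then show ?thesis using lhs pA by simp
      qed
    qed
  qed
qed


lemma sum_lists_prod:
  fixes g :: "nat \<Rightarrow> 'a::finite \<Rightarrow> real"
  shows "(\<Sum>Z\<in>{Z. length Z = n}. \<Prod>i<n. g i (Z!i)) = (\<Prod>i<n. \<Sum>z\<in>UNIV. g i z)"
proof (induction n)
  case 0
  have "{Z::'a list. length Z = 0} = {[]}" by auto
  then show ?case by simp
next
  case (Suc n)
  have inj: "inj_on (\<lambda>(Z,z). Z @ [z]) ({Z::'a list. length Z = n} \<times> UNIV)"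
    by (auto simp: inj_on_def)
  have img: "{Z::'a list. length Z = Suc n} = (\<lambda>(Z,z). Z @ [z]) ` ({Z. length Z = n} \<times> UNIV)"
    by (auto simp: length_Suc_conv_rev)
  have eq: "(\<Prod>i<Suc n. g i ((Z @ [z])!i)) = (\<Prod>i<n. g i (Z!i)) * g n z"
    if "length Z = n" for Z z
  proof -
    have "(\<Prod>i<n. g i ((Z @ [z])!i)) = (\<Prod>i<n. g i (Z!i))"
      using that by (intro prod.cong) (auto simp: nth_append)
    moreover have "(Z @ [z]) ! n = z" using that by (simp add: nth_append)
    ultimately show ?thesis by simp
  qed
  have "(\<Sum>Z\<in>{Z. length Z = Suc n}. \<Prod>i<Suc n. g i (Z!i))
      = (\<Sum>p\<in>{Z::'a list. length Z = n} \<times> UNIV. \<Prod>i<Suc n. g i (((\<lambda>(Z,z). Z @ [z]) p)!i))"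
    unfolding img sum.reindex[OF inj] by (simp add: comp_def case_prod_unfold)
  also have "\<dots> = (\<Sum>Z\<in>{Z::'a list. length Z = n}. \<Sum>z\<in>UNIV. \<Prod>i<Suc n. g i ((Z @ [z])!i))"
    by (simp only: sum.cartesian_product case_prod_unfold split_beta fst_conv snd_conv)
  also have "\<dots> = (\<Sum>Z\<in>{Z::'a list. length Z = n}. \<Sum>z\<in>UNIV. (\<Prod>i<n. g i (Z!i)) * g n z)"
    by (intro sum.cong refl) (simp only: eq mem_Collect_eq)
  also have "\<dots> = (\<Sum>Z\<in>{Z::'a list. length Z = n}. (\<Prod>i<n. g i (Z!i))) * (\<Sum>z\<in>UNIV. g n z)"
    by (simp only: sum_distrib_left[symmetric] sum_distrib_right[symmetric])
  also have "\<dots> = (\<Prod>i<Suc n. \<Sum>z\<in>UNIV. g i z)"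
    using Suc by simp
  finally show ?case .
qed

lemma sum_ind_div:
  fixes B :: "'a::finite set"
  shows "(\<Sum>z\<in>UNIV. (if z \<in> B then 1 else 0) / real c) = real (card B) / real c"
proof -
  have "(\<Sum>z\<in>UNIV. (if z \<in> B then 1 else 0) / real c) = (\<Sum>z\<in>UNIV. (if z \<in> B then 1 else 0)) / real c"
    by (simp add: sum_divide_distrib)
  also have "(\<Sum>z\<in>UNIV. (if z \<in> B then 1 else 0)::real) = real (card B)"
    by (simp add: sum.If_cases)
  finally show ?thesis .
qed

lemma tv_bound:
  fixes P :: "'w::finite \<Rightarrow> 'w set"
  assumes P_ne: "\<And>x. P x \<noteq> {}"
    and cards: "\<And>i. i < L \<Longrightarrow> card (P (X'!i)) = card (P (X!i))"
    and A: "A \<subseteq> {Z. length Z = L}"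
  shows "(\<Sum>Z\<in>A. PiX P L X Z) - (\<Sum>Z\<in>A. PiX P L X' Z)
     \<le> 1 - (\<Prod>i<L. real (card (P (X!i) \<inter> P (X'!i))) / real (card (P (X!i))))"
proof -
  define u where "u i z = (if z \<in> P (X!i) then 1 else 0) / real (card (P (X!i)))" for i z
  define v where "v i z = (if z \<in> P (X'!i) then 1 else 0) / real (card (P (X'!i)))" for i z
  define m where "m i z = min (u i z) (v i z)" for i z
  define U where "U = {Z::'w list. length Z = L}"
  define M where "M Z = (\<Prod>i<L. m i (Z!i))" for Z
  have cpos: "0 < card (P x)" for x using P_ne[of x] by (simp add: card_gt_0_iff del: card_0_eq)
  have finU: "finite U" unfolding U_def using finite_lists_length_eq[of "UNIV::'w set" L] by simp
  have mu: "PiX P L X Z = (\<Prod>i<L. u i (Z!i))" for Z unfolding PiX_def u_def ..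
  have nu: "PiX P L X' Z = (\<Prod>i<L. v i (Z!i))" for Z unfolding PiX_def v_def ..
  have su: "(\<Sum>z\<in>UNIV. u i z) = 1" for i
    unfolding u_def sum_ind_div using cpos[of "X!i"] P_ne by simp
  have sv: "(\<Sum>z\<in>UNIV. v i z) = 1" for i
    unfolding v_def sum_ind_div using cpos[of "X'!i"] P_ne by simp
  have mi: "m i z = (if z \<in> P (X!i) \<inter> P (X'!i) then 1 else 0) / real (card (P (X!i)))"
    if "i < L" for i z
    using cards[OF that] cpos[of "X!i"] unfolding m_def u_def v_def by auto
  have sm: "(\<Sum>z\<in>UNIV. m i z) = real (card (P (X!i) \<inter> P (X'!i))) / real (card (P (X!i)))"
    if "i < L" for i
    by (simp only: mi[OF that] sum_ind_div)
  have SU: "(\<Sum>Z\<in>U. PiX P L X Z) = 1" unfolding U_def mu sum_lists_prod su by simp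
  have SM: "(\<Sum>Z\<in>U. M Z) = (\<Prod>i<L. real (card (P (X!i) \<inter> P (X'!i))) / real (card (P (X!i))))"
    unfolding U_def M_def sum_lists_prod by (intro prod.cong refl) (simp add: sm)
  have u0: "0 \<le> u i z" for i z unfolding u_def by simp
  have v0: "0 \<le> v i z" for i z unfolding v_def by simp
  have Mmu: "M Z \<le> PiX P L X Z" for Z unfolding M_def mu
    by (intro prod_mono) (auto simp: m_def u0 v0)
  have Mnu: "M Z \<le> PiX P L X' Z" for Z unfolding M_def nu
    by (intro prod_mono) (auto simp: m_def u0 v0)
  have AU: "A \<subseteq> U" using A U_def by simp
  have "(\<Sum>Z\<in>A. PiX P L X Z) - (\<Sum>Z\<in>A. PiX P L X' Z) = (\<Sum>Z\<in>A. PiX P L X Z - PiX P L X' Z)"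
    by (simp add: sum_subtractf)
  also have "\<dots> \<le> (\<Sum>Z\<in>A. PiX P L X Z - M Z)"
    by (intro sum_mono) (use Mnu in auto)
  also have "\<dots> \<le> (\<Sum>Z\<in>U. PiX P L X Z - M Z)"
    by (intro sum_mono2 finU AU) (use Mmu in auto)
  also have "\<dots> = 1 - (\<Sum>Z\<in>U. M Z)" by (simp add: sum_subtractf SU)
  finally show ?thesis unfolding SM .
qed


lemma fRS_eq:
  assumes "\<forall>c. c \<noteq> y \<longrightarrow> gRS P L f X c < gRS P L f X y"
  shows "fRS P L f X = y"
  unfolding fRS_def
proof (rule the_equality)
  show "\<forall>c'. c' \<noteq> y \<longrightarrow> gRS P L f X c' < gRS P L f X y" using assms .
  fix c assume H: "\<forall>c'. c' \<noteq> c \<longrightarrow> gRS P L f X c' < gRS P L f X c"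
  show "c = y"
  proof (rule ccontr)
    assume "c \<noteq> y"
    then have "gRS P L f X y < gRS P L f X c" "gRS P L f X c < gRS P L f X y"
      using H assms by auto
    then show False by simp
  qed
qed

theorem proposition1:
  fixes S P :: "'w::finite \<Rightarrow> 'w set"
    and L R :: nat
    and f :: "'w list \<Rightarrow> 'y::finite"
    and X :: "'w list" and y :: 'y
  assumes S_refl: "\<And>x. x \<in> S x"
    and S_sym: "\<And>x x'. x' \<in> S x \<Longrightarrow> x \<in> S x'"
    and P_ne: "\<And>x. P x \<noteq> {}"
    and L_pos: "L \<ge> 1" and R_le: "R \<le> L"
    and Y_card: "card (UNIV :: 'y set) \<ge> 2"
    and P_card: "\<And>x x'. x' \<in> S x \<Longrightarrow> card (P x) = card (P x')"
    and X_len: "length X = L"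
    and Delta: "gRS P L f X y - gRS P L f X (yB P L f X y) - 2 * qX S P R X > 0"
  shows "\<forall>X'\<in>SX S L R X.
           (\<forall>c. c \<noteq> y \<longrightarrow> gRS P L f X' c < gRS P L f X' y)
           \<and> fRS P L f X' = y \<and> fRS P L f X = y"
proof -
  define g where "g Y c = gRS P L f Y c" for Y c
  define qs where "qs = map (qw S P) X"
  have cpos: "0 < card (P x)" for x using P_ne[of x] by (simp add: card_gt_0_iff del: card_0_eq)
  have ratio01: "0 \<le> real (card (P x \<inter> P x')) / real (card (P x))
       \<and> real (card (P x \<inter> P x')) / real (card (P x)) \<le> 1" for x x'
  proof -
    have "card (P x \<inter> P x') \<le> card (P x)" by (intro card_mono) auto
    then show ?thesis using cpos[of x] by (simp add: divide_le_eq_1)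
  qed
  have qw_le: "qw S P x \<le> real (card (P x \<inter> P x')) / real (card (P x))" if "x' \<in> S x" for x x'
    unfolding qw_def using that by (intro Min_le) auto
  have qw01: "0 \<le> qw S P x \<and> qw S P x \<le> 1" for x
  proof -
    have "qw S P x \<in> (\<lambda>x'. real (card (P x \<inter> P x')) / real (card (P x))) ` S x"
      unfolding qw_def using S_refl[of x] by (intro Min_in) auto
    then show ?thesis using ratio01 by auto
  qed
  have qs01: "\<forall>x\<in>set qs. 0 \<le> x \<and> x \<le> 1" unfolding qs_def using qw01 by auto
  have qX_nn: "0 \<le> qX S P R X"
  proof -
    have "\<forall>x\<in>set (take R (sort qs)). 0 \<le> x \<and> x \<le> 1" using qs01
      by (auto dest: in_set_takeD)
    then show ?thesis using prod_list_01 unfolding qX_def qs_def by auto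
  qed
  have main: "(\<forall>c. c \<noteq> y \<longrightarrow> g X' c < g X' y)" if X': "X' \<in> SX S L R X" for X'
  proof -
    have lenX': "length X' = L" and inS: "\<And>i. i < L \<Longrightarrow> X'!i \<in> S (X!i)"
      and cardD0: "card {i. i < L \<and> X' ! i \<noteq> X ! i} \<le> R"
      using X' unfolding SX_def by auto
    define D where "D = {i \<in> {..<L}. X'!i \<noteq> X!i}"
    have cardD: "card D \<le> R" using cardD0 unfolding D_def by simp
    have finD: "finite D" unfolding D_def by simp
    define ov where "ov i = real (card (P (X!i) \<inter> P (X'!i))) / real (card (P (X!i)))" for i
    have cards: "card (P (X'!i)) = card (P (X!i))" if "i < L" for i
      using P_card[OF inS[OF that]] by simp
    have ov1: "ov i = 1" if "i < L" "i \<notin> D" for i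
      using that cpos[of "X!i"] unfolding D_def ov_def by auto
    have "(\<Prod>i<L. ov i) = (\<Prod>i<L. if X'!i \<noteq> X!i then ov i else 1)"
      by (intro prod.cong refl) (auto simp: ov1 D_def)
    also have "\<dots> = (\<Prod>i\<in>D. ov i)"
      unfolding D_def by (rule prod.inter_filter[symmetric]) simp
    finally have po: "(\<Prod>i<L. ov i) = (\<Prod>i\<in>D. ov i)" .
    have "(\<Prod>i\<in>D. qs ! i) \<le> (\<Prod>i\<in>D. ov i)"
    proof (intro prod_mono conjI)
      fix i assume "i \<in> D"
      then have iL: "i < L" unfolding D_def by simp
      then have "qs ! i = qw S P (X!i)" unfolding qs_def using X_len by simp
      then show "0 \<le> qs ! i" "qs ! i \<le> ov i"
        using qw01 qw_le[OF inS[OF iL]] unfolding ov_def by auto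
    qed
    moreover have "prod_list (take R (sort qs)) \<le> (\<Prod>i\<in>D. qs ! i)"
    proof -
      have DL: "D \<subseteq> {..<length qs}" unfolding D_def qs_def using X_len by auto
      have "image_mset ((!) qs) (mset_set D) \<subseteq># image_mset ((!) qs) (mset_set {..<length qs})"
        by (intro image_mset_subseteq_mono subset_imp_msubset_mset_set DL) simp
      also have "image_mset ((!) qs) (mset_set {..<length qs}) = mset qs"
      proof -
        have "mset qs = mset (map ((!) qs) [0..<length qs])" by (simp add: map_nth)
        also have "\<dots> = image_mset ((!) qs) (mset_set {..<length qs})"
          by (simp add: atLeast0LessThan)
        finally show ?thesis by simp
      qed
      finally have sub: "image_mset ((!) qs) (mset_set D) \<subseteq># mset qs" .
      have sz: "size (image_mset ((!) qs) (mset_set D)) \<le> R" using cardD by simp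
      show ?thesis using prod_take_sort_le[OF qs01 sub sz]
        by (simp add: prod_unfold_prod_mset)
    qed
    ultimately have bound: "1 - qX S P R X \<le> (\<Prod>i<L. ov i)"
      unfolding qX_def qs_def[symmetric] po by simp
    have tv: "\<bar>g X c - g X' c\<bar> \<le> qX S P R X" for c
    proof -
      define A where "A = {Z::'w list. length Z = L \<and> f Z = c}"
      have AL: "A \<subseteq> {Z. length Z = L}" unfolding A_def by auto
      have gX: "g Y c = (\<Sum>Z\<in>A. PiX P L Y Z)" for Y unfolding g_def gRS_def A_def ..
      have t1: "g X c - g X' c \<le> 1 - (\<Prod>i<L. ov i)"
        unfolding gX ov_def by (rule tv_bound[OF P_ne cards AL])
      have t2: "g X' c - g X c
         \<le> 1 - (\<Prod>i<L. real (card (P (X'!i) \<inter> P (X!i))) / real (card (P (X'!i))))"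
        unfolding gX by (rule tv_bound[OF P_ne _ AL]) (simp add: cards)
      have "(\<Prod>i<L. real (card (P (X'!i) \<inter> P (X!i))) / real (card (P (X'!i)))) = (\<Prod>i<L. ov i)"
        unfolding ov_def by (intro prod.cong refl) (simp add: cards Int_commute)
      then show ?thesis using t1 t2 bound by linarith
    qed
    have exB: "\<exists>c. c \<noteq> y \<and> (\<forall>c'. c' \<noteq> y \<longrightarrow> g X c' \<le> g X c)"
    proof -
      have ne: "{c. c \<noteq> y} \<noteq> {}"
      proof
        assume "{c. c \<noteq> y} = {}"
        then have U1: "(UNIV :: 'y set) = {y}" by auto
        have "card (UNIV :: 'y set) = 1" by (subst U1) simp
        then show False using Y_card by simp
      qed
      have "Max (g X ` {c. c \<noteq> y}) \<in> g X ` {c. c \<noteq> y}"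
        using ne by (intro Min_in Max_in) auto
      then obtain cb where cb: "cb \<noteq> y" "g X cb = Max (g X ` {c. c \<noteq> y})" by auto
      then show ?thesis by (intro exI[of _ cb]) auto
    qed
    have yB: "yB P L f X y \<noteq> y \<and> (\<forall>c'. c' \<noteq> y \<longrightarrow> g X c' \<le> g X (yB P L f X y))"
      unfolding yB_def g_def using exB[unfolded g_def] by (rule someI_ex)
    show ?thesis
    proof (intro allI impI)
      fix c assume "c \<noteq> y"
      then have "g X c \<le> g X (yB P L f X y)" using yB by auto
      moreover have "g X y - g X (yB P L f X y) - 2 * qX S P R X > 0" using Delta g_def by simp
      ultimately show "g X' c < g X' y" using tv[of c] tv[of y] by linarith
    qed
  qed
  have XS: "X \<in> SX S L R X" unfolding SX_def using X_len S_refl by simp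
  have fX: "fRS P L f X = y" using main[OF XS] unfolding g_def by (rule fRS_eq)
  show ?thesis
  proof
    fix X' assume H: "X' \<in> SX S L R X"
    have m: "\<forall>c. c \<noteq> y \<longrightarrow> gRS P L f X' c < gRS P L f X' y"
      using main[OF H] unfolding g_def .
    show "(\<forall>c. c \<noteq> y \<longrightarrow> gRS P L f X' c < gRS P L f X' y)
           \<and> fRS P L f X' = y \<and> fRS P L f X = y"
      using m fRS_eq[OF m] fX by simp
  qed
qed

end
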